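(* Let $Y_1,\dots,Y_k\in\{0,1\}$ be independent unbiased Bernoulli random variables (each equal to $1$ with probability $1/2$), let $a_1,\dots,a_k\geq 0$ be reals, and let $X=\sum_{i=1}^k a_iY_i$ with mean $\mu=\mathbb{E}[X]$ and standard deviation $\sigma=\sqrt{\mathrm{Var}(X)}$. Then for every $c\in[0,1]$, $$\Pr(X\geq\mu+c\sigma)\geq\frac{(1-c)^2}{4}.$$ *)

theory Defs
  imports "HOL-Probability.Probability"
begin

end

theory Submission
  imports Defs
begin

definition avg :: "nat set \<Rightarrow> (nat set \<Rightarrow> real) \<Rightarrow> real" where
  "avg F f = (\<Sum>S\<in>Pow F. f S) / 2 ^ card F"

lemma avg_insert:
  assumes "finite F" "i \<notin> F"
  shows "avg (insert i F) f = (avg F (\<lambda>S. f (insert i S)) + avg F f) / 2"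
proof -
  have inj: "inj_on (insert i) (Pow F)"
    using assms(2) by (auto simp: inj_on_def)
  have disj: "Pow F \<inter> insert i ` Pow F = {}" using assms(2) by auto
  have "(\<Sum>S\<in>Pow (insert i F). f S) = (\<Sum>S\<in>Pow F. f S) + (\<Sum>S\<in>insert i ` Pow F. f S)"
    unfolding Pow_insert using assms(1) disj by (intro sum.union_disjoint) auto
  also have "(\<Sum>S\<in>insert i ` Pow F. f S) = (\<Sum>S\<in>Pow F. f (insert i S))"
    using sum.reindex[OF inj] by simp
  finally show ?thesis using assms unfolding avg_def by (simp add: field_simps)
qed

lemma avg_empty[simp]: "avg {} f = f {}"
  unfolding avg_def by simp

lemma avg_cong: "(\<And>S. S \<subseteq> F \<Longrightarrow> f S = g S) \<Longrightarrow> avg F f = avg F g"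
  unfolding avg_def by (metis (mono_tags, lifting) PowD sum.cong)

lemma avg_add: "avg F (\<lambda>S. f S + g S) = avg F f + avg F g"
  unfolding avg_def by (simp add: sum.distrib add_divide_distrib)

lemma avg_diff: "avg F (\<lambda>S. f S - g S) = avg F f - avg F g"
  unfolding avg_def by (simp add: sum_subtractf diff_divide_distrib)

lemma avg_cmult: "avg F (\<lambda>S. c * f S) = c * avg F f"
  unfolding avg_def by (simp add: sum_distrib_left)

lemma avg_divide: "avg F (\<lambda>S. f S / c) = avg F f / c"
  unfolding avg_def sum_divide_distrib[symmetric] by simp

lemma avg_const: "finite F \<Longrightarrow> avg F (\<lambda>S. c) = c"
  unfolding avg_def by (simp add: card_Pow)

lemma avg_mono: "(\<And>S. S \<subseteq> F \<Longrightarrow> f S \<le> g S) \<Longrightarrow> avg F f \<le> avg F g"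
  unfolding avg_def by (intro divide_right_mono sum_mono) auto

lemma avg_nonneg: "(\<And>S. S \<subseteq> F \<Longrightarrow> 0 \<le> f S) \<Longrightarrow> 0 \<le> avg F f"
  using avg_mono[of F "\<lambda>_. 0" f] unfolding avg_def by simp

lemma avg_CS: "(avg F (\<lambda>S. f S * g S))^2 \<le> avg F (\<lambda>S. (f S)^2) * avg F (\<lambda>S. (g S)^2)"
proof -
  have "(\<Sum>S\<in>Pow F. f S * g S)^2 \<le> (\<Sum>S\<in>Pow F. (f S)^2) * (\<Sum>S\<in>Pow F. (g S)^2)"
    by (rule Cauchy_Schwarz_ineq_sum)
  then have "(\<Sum>S\<in>Pow F. f S * g S)^2 / (2^card F)^2 \<le> (\<Sum>S\<in>Pow F. (f S)^2) * (\<Sum>S\<in>Pow F. (g S)^2) / (2^card F)^2"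
    by (intro divide_right_mono) auto
  then show ?thesis unfolding avg_def by (simp add: power_divide power2_eq_square)
qed

lemma avg_compl:
  assumes "finite F"
  shows "avg F f = avg F (\<lambda>S. f (F - S))"
proof -
  have "(\<Sum>S\<in>Pow F. f S) = (\<Sum>S\<in>Pow F. f (F - S))"
    by (rule sum.reindex_bij_witness[where i="\<lambda>S. F - S" and j="\<lambda>S. F - S"]) (auto simp: double_diff)
  then show ?thesis unfolding avg_def by simp
qed


definition sg :: "nat \<Rightarrow> nat set \<Rightarrow> real" where
  "sg j S = (if j \<in> S then 1 else -1)"

definition fl :: "nat \<Rightarrow> nat set \<Rightarrow> nat set" where
  "fl j S = (if j \<in> S then S - {j} else insert j S)"

definition En :: "nat set \<Rightarrow> (nat set \<Rightarrow> real) \<Rightarrow> real" where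
  "En F f = (\<Sum>j\<in>F. avg F (\<lambda>S. ((f S - f (fl j S)) / 2)^2))"

definition Wone :: "nat set \<Rightarrow> (nat set \<Rightarrow> real) \<Rightarrow> real" where
  "Wone F f = (\<Sum>j\<in>F. (avg F (\<lambda>S. f S * sg j S))^2)"

definition Vr :: "nat set \<Rightarrow> (nat set \<Rightarrow> real) \<Rightarrow> real" where
  "Vr F f = avg F (\<lambda>S. (f S)^2) - (avg F f)^2"

lemma En_nonneg: "0 \<le> En F f"
  unfolding En_def by (intro sum_nonneg avg_nonneg) auto

lemma decomp:
  fixes f :: "nat set \<Rightarrow> real"
  assumes F: "finite F" "i \<notin> F"
  defines "g \<equiv> (\<lambda>S. (f (insert i S) + f S) / 2)"
  defines "h \<equiv> (\<lambda>S. (f (insert i S) - f S) / 2)"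
  shows "Vr (insert i F) f = Vr F g + avg F (\<lambda>S. (h S)^2)"
    and "En (insert i F) f = En F g + En F h + avg F (\<lambda>S. (h S)^2)"
    and "Wone (insert i F) f = Wone F g + (avg F h)^2"
proof -
  have a1: "avg (insert i F) f = avg F g"
    unfolding g_def avg_divide avg_add avg_insert[OF F] ..
  have a2: "avg (insert i F) (\<lambda>S. (f S)^2) = avg F (\<lambda>S. (g S)^2) + avg F (\<lambda>S. (h S)^2)"
  proof -
    have "avg (insert i F) (\<lambda>S. (f S)^2) = (avg F (\<lambda>S. (f (insert i S))^2) + avg F (\<lambda>S. (f S)^2)) / 2"
      using avg_insert[OF F] .
    also have "\<dots> = avg F (\<lambda>S. ((f (insert i S))^2 + (f S)^2) / 2)"
      by (simp add: avg_divide avg_add)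
    also have "\<dots> = avg F (\<lambda>S. (g S)^2 + (h S)^2)"
      by (intro avg_cong) (simp add: g_def h_def power2_eq_square field_simps)
    finally show ?thesis by (simp add: avg_add)
  qed
  show "Vr (insert i F) f = Vr F g + avg F (\<lambda>S. (h S)^2)"
    unfolding Vr_def a1 a2 by simp
  have e1: "avg (insert i F) (\<lambda>S. ((f S - f (fl i S)) / 2)^2) = avg F (\<lambda>S. (h S)^2)"
  proof -
    have SiS: "S - {i} = S" if "S \<subseteq> F" for S using that F by auto
    have A: "avg F (\<lambda>S. ((f (insert i S) - f (fl i (insert i S))) / 2)^2) = avg F (\<lambda>S. (h S)^2)"
      using F SiS by (intro avg_cong) (auto simp: fl_def h_def)
    have B: "avg F (\<lambda>S. ((f S - f (fl i S)) / 2)^2) = avg F (\<lambda>S. (h S)^2)"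
      using F by (intro avg_cong) (auto simp: fl_def h_def subset_iff power_divide power2_commute)
    show ?thesis unfolding avg_insert[OF F] A B by simp
  qed
  have e2: "avg (insert i F) (\<lambda>S. ((f S - f (fl j S)) / 2)^2)
      = avg F (\<lambda>S. ((g S - g (fl j S)) / 2)^2) + avg F (\<lambda>S. ((h S - h (fl j S)) / 2)^2)"
    if j: "j \<in> F" for j
  proof -
    have "avg (insert i F) (\<lambda>S. ((f S - f (fl j S)) / 2)^2)
        = (avg F (\<lambda>S. ((f (insert i S) - f (fl j (insert i S))) / 2)^2) + avg F (\<lambda>S. ((f S - f (fl j S)) / 2)^2)) / 2"
      using avg_insert[OF F] .
    also have "avg F (\<lambda>S. ((f (insert i S) - f (fl j (insert i S))) / 2)^2)
       = avg F (\<lambda>S. ((f (insert i S) - f (insert i (fl j S))) / 2)^2)"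
      using F j by (intro avg_cong) (auto simp: fl_def insert_commute insert_Diff_if)
    also have "(avg F (\<lambda>S. ((f (insert i S) - f (insert i (fl j S))) / 2)^2) + avg F (\<lambda>S. ((f S - f (fl j S)) / 2)^2)) / 2
       = avg F (\<lambda>S. ((g S - g (fl j S)) / 2)^2 + ((h S - h (fl j S)) / 2)^2)"
      unfolding avg_add[symmetric] avg_divide[symmetric]
      by (intro avg_cong) (simp add: g_def h_def power2_eq_square field_simps)
    finally show ?thesis by (simp add: avg_add)
  qed
  show "En (insert i F) f = En F g + En F h + avg F (\<lambda>S. (h S)^2)"
    unfolding En_def using F e1 e2 by (simp add: sum.distrib)
  have w1: "avg (insert i F) (\<lambda>S. f S * sg i S) = avg F h"
  proof -
    have "avg (insert i F) (\<lambda>S. f S * sg i S) = (avg F (\<lambda>S. f (insert i S) * sg i (insert i S)) + avg F (\<lambda>S. f S * sg i S)) / 2"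
      using avg_insert[OF F] .
    also have "avg F (\<lambda>S. f S * sg i S) = avg F (\<lambda>S. - f S)"
      using F by (intro avg_cong) (auto simp: sg_def)
    also have "avg F (\<lambda>S. f (insert i S) * sg i (insert i S)) = avg F (\<lambda>S. f (insert i S))"
      by (intro avg_cong) (auto simp: sg_def)
    finally show ?thesis unfolding h_def
      using avg_cmult[of F "1/2" "\<lambda>S. f (insert i S) - f S"] avg_diff[of F "\<lambda>S. f (insert i S)" f]
        avg_cmult[of F "-1" f]
      by (simp add: field_simps)
  qed
  have w2: "avg (insert i F) (\<lambda>S. f S * sg j S) = avg F (\<lambda>S. g S * sg j S)" if j: "j \<in> F" for j
  proof -
    have "avg (insert i F) (\<lambda>S. f S * sg j S) = (avg F (\<lambda>S. f (insert i S) * sg j (insert i S)) + avg F (\<lambda>S. f S * sg j S)) / 2"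
      using avg_insert[OF F] .
    also have "avg F (\<lambda>S. f (insert i S) * sg j (insert i S)) = avg F (\<lambda>S. f (insert i S) * sg j S)"
      using F j by (intro avg_cong) (auto simp: sg_def)
    finally show ?thesis unfolding g_def
      using avg_cmult[of F "1/2" "\<lambda>S. f (insert i S) * sg j S + f S * sg j S"]
        avg_add[of F "\<lambda>S. f (insert i S) * sg j S" "\<lambda>S. f S * sg j S"]
      by (simp add: field_simps)
  qed
  show "Wone (insert i F) f = Wone F g + (avg F h)^2"
    unfolding Wone_def using F w1 w2 by simp
qed

lemma poincare: "finite F \<Longrightarrow> Vr F f \<le> En F f"
proof (induction F arbitrary: f rule: finite_induct)
  case empty
  then show ?case by (simp add: Vr_def En_def)
next
  case (insert i F)
  show ?case
    using decomp[OF insert(1,2), of f] insert(3)[of "\<lambda>S. (f (insert i S) + f S) / 2"]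
      En_nonneg[of F "\<lambda>S. (f (insert i S) - f S) / 2"] by simp
qed

lemma level2: "finite F \<Longrightarrow> 2 * Vr F f \<le> En F f + Wone F f"
proof (induction F arbitrary: f rule: finite_induct)
  case empty
  then show ?case by (simp add: Vr_def En_def Wone_def)
next
  case (insert i F)
  let ?h = "\<lambda>S. (f (insert i S) - f S) / 2"
  have "Vr F ?h \<le> En F ?h" by (rule poincare[OF insert(1)])
  then show ?case
    using decomp[OF insert(1,2), of f] insert(3)[of "\<lambda>S. (f (insert i S) + f S) / 2"]
    unfolding Vr_def by simp
qed


definition Zs :: "(nat \<Rightarrow> real) \<Rightarrow> nat set \<Rightarrow> nat set \<Rightarrow> real" where
  "Zs b F S = (\<Sum>j\<in>F. b j * sg j S)"

lemma Z_ins1: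
  assumes "finite F" "i \<notin> F" "S \<subseteq> F"
  shows "Zs b (insert i F) (insert i S) = Zs b F S + b i"
proof -
  have "(\<Sum>j\<in>F. b j * sg j (insert i S)) = (\<Sum>j\<in>F. b j * sg j S)"
    using assms by (intro sum.cong) (auto simp: sg_def)
  then show ?thesis using assms unfolding Zs_def by (simp add: sg_def)
qed

lemma Z_ins0:
  assumes "finite F" "i \<notin> F" "S \<subseteq> F"
  shows "Zs b (insert i F) S = Zs b F S - b i"
proof -
  have "i \<notin> S" using assms by auto
  then show ?thesis using assms unfolding Zs_def by (simp add: sg_def)
qed

lemma moment2: "finite F \<Longrightarrow> avg F (\<lambda>S. (Zs b F S)^2) = (\<Sum>j\<in>F. (b j)^2)"
proof (induction F rule: finite_induct)
  case empty
  then show ?case by (simp add: Zs_def)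
next
  case (insert i F)
  have "avg (insert i F) (\<lambda>S. (Zs b (insert i F) S)^2)
     = (avg F (\<lambda>S. (Zs b F S + b i)^2) + avg F (\<lambda>S. (Zs b F S - b i)^2)) / 2"
  proof -
    have A1: "avg F (\<lambda>S. (Zs b (insert i F) (insert i S))^2) = avg F (\<lambda>S. (Zs b F S + b i)^2)"
      by (intro avg_cong) (simp add: Z_ins1 insert(1,2))
    have A0: "avg F (\<lambda>S. (Zs b (insert i F) S)^2) = avg F (\<lambda>S. (Zs b F S - b i)^2)"
      by (intro avg_cong) (simp add: Z_ins0 insert(1,2))
    show ?thesis unfolding avg_insert[OF insert(1,2)] A1 A0 ..
  qed
  also have "\<dots> = avg F (\<lambda>S. (Zs b F S)^2 + (b i)^2)"
    unfolding avg_add[symmetric] avg_divide[symmetric]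
    by (intro avg_cong) (simp add: power2_eq_square field_simps)
  also have "\<dots> = (\<Sum>j\<in>insert i F. (b j)^2)"
    using insert by (simp add: avg_add avg_const)
  finally show ?case .
qed

lemma moment4: "finite F \<Longrightarrow> avg F (\<lambda>S. (Zs b F S)^4) \<le> 3 * (\<Sum>j\<in>F. (b j)^2)^2"
proof (induction F rule: finite_induct)
  case empty
  then show ?case by (simp add: Zs_def)
next
  case (insert i F)
  have "avg (insert i F) (\<lambda>S. (Zs b (insert i F) S)^4)
     = (avg F (\<lambda>S. (Zs b F S + b i)^4) + avg F (\<lambda>S. (Zs b F S - b i)^4)) / 2"
  proof -
    have A1: "avg F (\<lambda>S. (Zs b (insert i F) (insert i S))^4) = avg F (\<lambda>S. (Zs b F S + b i)^4)"
      by (intro avg_cong) (simp add: Z_ins1 insert(1,2))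
    have A0: "avg F (\<lambda>S. (Zs b (insert i F) S)^4) = avg F (\<lambda>S. (Zs b F S - b i)^4)"
      by (intro avg_cong) (simp add: Z_ins0 insert(1,2))
    show ?thesis unfolding avg_insert[OF insert(1,2)] A1 A0 ..
  qed
  also have "\<dots> = avg F (\<lambda>S. (Zs b F S)^4 + 6 * (b i)^2 * (Zs b F S)^2 + (b i)^4)"
    unfolding avg_add[symmetric] avg_divide[symmetric]
    by (intro avg_cong) (simp add: power2_eq_square power4_eq_xxxx field_simps)
  also have "\<dots> = avg F (\<lambda>S. (Zs b F S)^4) + 6 * (b i)^2 * (\<Sum>j\<in>F. (b j)^2) + (b i)^4"
    using insert(1) by (simp add: avg_add avg_const avg_cmult moment2 mult.assoc)
  also have "\<dots> \<le> 3 * (\<Sum>j\<in>F. (b j)^2)^2 + 6 * (b i)^2 * (\<Sum>j\<in>F. (b j)^2) + 3 * (b i)^4"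
  proof -
    have "0 \<le> ((b i)^2)^2" by simp
    then have "0 \<le> (b i)^4" by (simp add: power_mult[symmetric])
    then show ?thesis using insert(3) by linarith
  qed
  also have "\<dots> = 3 * (\<Sum>j\<in>insert i F. (b j)^2)^2"
    using insert(1,2) by (simp add: power2_eq_square power4_eq_xxxx algebra_simps)
  finally show ?case .
qed

lemma Zs_compl: "S \<subseteq> F \<Longrightarrow> Zs b F (F - S) = - Zs b F S"
  unfolding Zs_def sum_negf[symmetric]
  by (intro sum.cong) (auto simp: sg_def)

lemma avg_sym: "finite F \<Longrightarrow> avg F (\<lambda>S. g (Zs b F S)) = avg F (\<lambda>S. g (- Zs b F S))"
  by (subst avg_compl) (auto intro!: avg_cong simp: Zs_compl)

lemma Zs_fl:
  assumes "finite F" "j \<in> F"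
  shows "Zs b F (fl j S) = Zs b F S - 2 * b j * sg j S"
proof -
  have "Zs b F (fl j S) = b j * sg j (fl j S) + (\<Sum>i\<in>F - {j}. b i * sg i (fl j S))"
    unfolding Zs_def using assms by (simp add: sum.remove)
  also have "(\<Sum>i\<in>F - {j}. b i * sg i (fl j S)) = (\<Sum>i\<in>F - {j}. b i * sg i S)"
    by (intro sum.cong) (auto simp: sg_def fl_def)
  also have "Zs b F S = b j * sg j S + (\<Sum>i\<in>F - {j}. b i * sg i S)"
    unfolding Zs_def using assms by (simp add: sum.remove)
  ultimately show ?thesis by (simp add: sg_def fl_def)
qed

lemma szarek:
  assumes F: "finite F"
  shows "(\<Sum>j\<in>F. (b j)^2) \<le> 2 * (avg F (\<lambda>S. \<bar>Zs b F S\<bar>))^2"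
proof -
  let ?f = "\<lambda>S. \<bar>Zs b F S\<bar>"
  have W: "Wone F ?f = 0"
  proof -
    have "avg F (\<lambda>S. ?f S * sg j S) = 0" if j: "j \<in> F" for j
    proof -
      have "avg F (\<lambda>S. ?f S * sg j S) = avg F (\<lambda>S. ?f (F - S) * sg j (F - S))"
        by (rule avg_compl[OF F])
      also have "\<dots> = avg F (\<lambda>S. - (?f S * sg j S))"
        using j by (intro avg_cong) (auto simp: Zs_compl sg_def)
      finally show ?thesis using avg_cmult[of F "-1" "\<lambda>S. ?f S * sg j S"] by simp
    qed
    then show ?thesis unfolding Wone_def by simp
  qed
  have E: "En F ?f \<le> (\<Sum>j\<in>F. (b j)^2)"
    unfolding En_def
  proof (rule sum_mono)
    fix j assume j: "j \<in> F"
    have "((?f S - ?f (fl j S)) / 2)^2 \<le> (b j)^2" for S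
    proof -
      have "\<bar>?f S - ?f (fl j S)\<bar> \<le> \<bar>Zs b F S - Zs b F (fl j S)\<bar>"
        by (rule abs_triangle_ineq3)
      also have "\<dots> = 2 * \<bar>b j\<bar>" using Zs_fl[OF F j] by (simp add: sg_def abs_mult)
      finally have "\<bar>(?f S - ?f (fl j S)) / 2\<bar> \<le> \<bar>b j\<bar>" by simp
      then show ?thesis by (simp only: abs_le_square_iff)
    qed
    then have "avg F (\<lambda>S. ((?f S - ?f (fl j S)) / 2)^2) \<le> avg F (\<lambda>_. (b j)^2)"
      by (intro avg_mono)
    then show "avg F (\<lambda>S. ((?f S - ?f (fl j S)) / 2)^2) \<le> (b j)^2"
      by (simp only: avg_const[OF F])
  qed
  have V: "Vr F ?f = (\<Sum>j\<in>F. (b j)^2) - (avg F ?f)^2"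
    unfolding Vr_def using moment2[OF F, of b] by simp
  show ?thesis using level2[OF F, of ?f] W E V by simp
qed

lemma arith1:
  fixes c q :: real
  assumes "23/100 \<le> c" "c \<le> 1" "(1 - c^2)^2 \<le> 6 * q"
  shows "(1 - c)^2 / 4 \<le> q"
proof -
  have h: "123/100 \<le> 1 + c" using assms(1) by simp
  have "(123/100) * (123/100) \<le> (1+c) * (1+c)" by (rule mult_mono[OF h h]) (use h in auto)
  then have "(1+c)^2 \<ge> 3/2" by (simp add: power2_eq_square)
  then have "(1-c)^2 * (3/2) \<le> (1-c)^2 * (1+c)^2" by (intro mult_left_mono) auto
  also have "\<dots> = (1 - c^2)^2" by (simp add: power2_eq_square algebra_simps)
  finally show ?thesis using assms(3) by simp
qed

lemma arith2:
  fixes c q u w :: real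
  assumes c: "0 < c" "c \<le> 23/100" and q: "0 \<le> q" "q \<le> 1"
    and u: "1/2 \<le> u^2" "0 \<le> u"
    and w: "w = sqrt (2*q)"
    and key: "u - c + c * w^2 \<le> w"
  shows "(1 - c)^2 / 4 \<le> q"
proof (rule ccontr)
  assume "\<not> ?thesis"
  then have qlt: "q < (1 - c)^2 / 4" by simp
  define s where "s = sqrt (2::real)"
  have s2: "s^2 = 2" unfolding s_def by simp
  have s0: "s > 0" unfolding s_def by simp
  have slo: "s \<ge> 1414/1000"
  proof (rule ccontr)
    assume "\<not> ?thesis" then have "s < 1414/1000" by simp
    then have "s^2 < (1414/1000)^2" using s0 by (intro power_strict_mono) auto
    then show False using s2 by (simp add: power2_eq_square)
  qed
  have w0: "w \<ge> 0" using w q by simp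
  have w2: "w^2 = 2*q" using w q by simp
  define w0 where "w0 = (1 - c) * s / 2"
  have w02: "w0^2 = (1-c)^2 / 2" unfolding w0_def using s2 by (simp add: power_mult_distrib power_divide)
  have w0pos: "w0 \<ge> 0" unfolding w0_def using c s0 by simp
  have "w^2 < w0^2" using w2 w02 qlt by simp
  then have wlt: "w < w0" using w0 w0pos using power2_less_imp_less by blast
  have shi: "s \<le> 2"
  proof (rule ccontr)
    assume "\<not> ?thesis" then have "2 < s" by simp
    then have "2^2 < s^2" by (intro power_strict_mono) auto
    then show False using s2 by simp
  qed
  have "(1 - c) * s \<le> 1 * 2" using c s0 shi by (intro mult_mono) auto
  then have w0le: "w0 \<le> 1" unfolding w0_def by simp
  have ule: "s/2 \<le> u"
  proof (rule ccontr)
    assume "\<not> ?thesis" then have "u < s/2" by simp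
    then have "u^2 < (s/2)^2" using u(2) by (intro power_strict_mono) auto
    then show False using s2 u(1) by (simp add: power_divide)
  qed
  have "(w0 - c*w0^2) - (w - c*w^2) = (w0 - w) * (1 - c*(w0 + w))"
    by (simp add: power2_eq_square algebra_simps)
  moreover have "1 - c*(w0 + w) > 0"
  proof -
    have "w0 + w \<le> 2" using wlt w0le by simp
    then have "c * (w0 + w) \<le> 23/100 * 2" using c w0 w0pos by (intro mult_mono) auto
    then show ?thesis by simp
  qed
  ultimately have "w - c*w^2 < w0 - c*w0^2" using wlt mult_pos_pos[of "w0 - w" "1 - c*(w0 + w)"] by linarith
  then have "s/2 - c < (1 - c) * s / 2 - c * ((1-c)^2/2)"
    using key ule w02 unfolding w0_def by simp
  then have "c * (s/2 - 1 + (1-c)^2/2) < 0" by (simp add: algebra_simps)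
  then have "s/2 - 1 + (1-c)^2/2 < 0" using c by (simp add: mult_less_0_iff)
  moreover have "(1-c)^2 \<ge> (77/100)^2" using c by (intro power_mono) auto
  ultimately show False using slo by (simp add: power2_eq_square)
qed


abbreviation ind :: "bool \<Rightarrow> real" where "ind P \<equiv> (if P then 1 else 0)"

lemma core:
  fixes b :: "nat \<Rightarrow> real" and c :: real
  assumes F: "finite F" and c: "0 \<le> c" "c \<le> 1"
  shows "(1 - c)^2 / 4 \<le> avg F (\<lambda>S. ind (c * sqrt (\<Sum>j\<in>F. (b j)^2) \<le> Zs b F S))"
proof -
  define v where "v = (\<Sum>j\<in>F. (b j)^2)"
  define Z where "Z = Zs b F"
  define t where "t = c * sqrt v"
  define q where "q = avg F (\<lambda>S. ind (t \<le> Z S))"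
  have v0: "0 \<le> v" unfolding v_def by (intro sum_nonneg) auto
  have t0: "0 \<le> t" unfolding t_def using c v0 by simp
  have sym: "avg F (\<lambda>S. g (Z S)) = avg F (\<lambda>S. g (- Z S))" for g
    unfolding Z_def by (rule avg_sym[OF F])
  have mom2: "avg F (\<lambda>S. (Z S)^2) = v" unfolding Z_def v_def by (rule moment2[OF F])
  have mom4: "avg F (\<lambda>S. (Z S)^4) \<le> 3 * v^2" unfolding Z_def v_def by (rule moment4[OF F])
  have q01: "0 \<le> q" "q \<le> 1" unfolding q_def
    using avg_mono[of F "\<lambda>S. ind (t \<le> Z S)" "\<lambda>_. 1"] avg_const[OF F, of 1]
      avg_nonneg[of F "\<lambda>S. ind (t \<le> Z S)"] by auto
  have half: "1/2 \<le> avg F (\<lambda>S. ind (0 \<le> Z S))"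
  proof -
    have "avg F (\<lambda>S. ind (0 \<le> Z S)) = avg F (\<lambda>S. ind (0 \<le> - Z S))"
      using sym[of "\<lambda>z. ind (0 \<le> z)"] .
    moreover have "avg F (\<lambda>_. 1) \<le> avg F (\<lambda>S. ind (0 \<le> Z S) + ind (0 \<le> - Z S))"
      by (intro avg_mono) auto
    ultimately show ?thesis by (simp add: avg_add avg_const[OF F])
  qed
  have goal: "(1 - c)^2 / 4 \<le> q"
  proof (cases "t = 0")
    case True
    then have "q = avg F (\<lambda>S. ind (0 \<le> Z S))" unfolding q_def by simp
    moreover have "(1 - c)^2 \<le> 1" using c by (intro power_le_one) auto
    ultimately show ?thesis using half by simp
  next
    case False
    then have tpos: "0 < t" and cpos: "0 < c" and vpos: "0 < v" using t0 c v0 unfolding t_def by auto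
    have t2: "t^2 = c^2 * v" unfolding t_def using v0 by (simp add: power_mult_distrib)
    show ?thesis
    proof (cases "23/100 \<le> c")
      case True
      define I where "I = (\<lambda>S. ind (t^2 \<le> (Z S)^2))"
      have I2: "avg F I \<le> 2 * q"
      proof -
        have "avg F I \<le> avg F (\<lambda>S. ind (t \<le> Z S) + ind (t \<le> - Z S))"
        proof (intro avg_mono)
          fix S
          show "I S \<le> ind (t \<le> Z S) + ind (t \<le> - Z S)"
          proof (cases "t^2 \<le> (Z S)^2")
            case True
            then have "t \<le> \<bar>Z S\<bar>" using t0 by (metis abs_le_square_iff abs_of_nonneg)
            then show ?thesis unfolding I_def by auto
          qed (auto simp: I_def)
        qed
        also have "\<dots> = 2 * q" unfolding avg_add q_def using sym[of "\<lambda>z. ind (t \<le> z)"] by simp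
        finally show ?thesis .
      qed
      have split: "v = avg F (\<lambda>S. (Z S)^2 * I S) + avg F (\<lambda>S. (Z S)^2 * ind ((Z S)^2 < t^2))"
        unfolding mom2[symmetric] avg_add[symmetric] by (intro avg_cong) (auto simp: I_def)
      have small: "avg F (\<lambda>S. (Z S)^2 * ind ((Z S)^2 < t^2)) \<le> t^2"
        using avg_mono[of F "\<lambda>S. (Z S)^2 * ind ((Z S)^2 < t^2)" "\<lambda>_. t^2"] avg_const[OF F] by fastforce
      have cs: "(avg F (\<lambda>S. (Z S)^2 * I S))^2 \<le> avg F (\<lambda>S. ((Z S)^2)^2) * avg F (\<lambda>S. (I S)^2)"
        by (rule avg_CS)
      also have "avg F (\<lambda>S. (I S)^2) = avg F I" by (intro avg_cong) (auto simp: I_def)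
      also have "avg F (\<lambda>S. ((Z S)^2)^2) = avg F (\<lambda>S. (Z S)^4)" by (simp add: power_mult[symmetric])
      finally have cs2: "(avg F (\<lambda>S. (Z S)^2 * I S))^2 \<le> 3 * v^2 * (2 * q)"
      proof -
        assume h: "(avg F (\<lambda>S. (Z S)^2 * I S))^2 \<le> avg F (\<lambda>S. (Z S)^4) * avg F I"
        have "avg F I \<ge> 0" unfolding I_def by (intro avg_nonneg) auto
        then have "avg F (\<lambda>S. (Z S)^4) * avg F I \<le> 3 * v^2 * (2 * q)"
          using mom4 I2 by (intro mult_mono) auto
        then show ?thesis using h by linarith
      qed
      have lo: "(1 - c^2) * v \<le> avg F (\<lambda>S. (Z S)^2 * I S)" using split small t2 by (simp add: algebra_simps)
      have "0 \<le> (1 - c^2) * v" using c v0 by (simp add: abs_le_square_iff[symmetric] power2_eq_square mult_le_one)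
      then have "((1 - c^2) * v)^2 \<le> (avg F (\<lambda>S. (Z S)^2 * I S))^2" using lo by (intro power_mono) auto
      moreover have "((1 - c^2) * v)^2 = (1 - c^2)^2 * v^2" by (simp add: power_mult_distrib)
      ultimately have "(1 - c^2)^2 * v^2 \<le> 6 * q * v^2" using cs2 by (simp add: mult.commute mult.left_commute)
      then have "(1 - c^2)^2 \<le> 6 * q" using vpos by simp
      then show ?thesis using arith1 True c by blast
    next
      case False
      then have c23: "c \<le> 23/100" by simp
      define e where "e = avg F (\<lambda>S. \<bar>Z S\<bar>)"
      have e0: "0 \<le> e" unfolding e_def by (intro avg_nonneg) auto
      have sz: "v \<le> 2 * e^2" unfolding v_def e_def Z_def by (rule szarek[OF F])
      have P1: "avg F (\<lambda>S. Z S * ind (0 < Z S)) = e / 2"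
      proof -
        have "e = avg F (\<lambda>S. Z S * ind (0 < Z S) + (- Z S) * ind (0 < - Z S))"
          unfolding e_def by (intro avg_cong) auto
        also have "\<dots> = 2 * avg F (\<lambda>S. Z S * ind (0 < Z S))"
          unfolding avg_add using sym[of "\<lambda>z. z * ind (0 < z)"] by simp
        finally show ?thesis by simp
      qed
      have P2: "avg F (\<lambda>S. (Z S)^2 * ind (0 < Z S)) \<le> v / 2"
      proof -
        have "avg F (\<lambda>S. (Z S)^2 * ind (0 < Z S) + (- Z S)^2 * ind (0 < - Z S)) \<le> v"
          unfolding mom2[symmetric] by (intro avg_mono) auto
        moreover have "avg F (\<lambda>S. (Z S)^2 * ind (0 < Z S) + (- Z S)^2 * ind (0 < - Z S))
             = 2 * avg F (\<lambda>S. (Z S)^2 * ind (0 < Z S))"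
          unfolding avg_add using sym[of "\<lambda>z. z^2 * ind (0 < z)"] by simp
        ultimately show ?thesis by simp
      qed
      have P3: "avg F (\<lambda>S. ind (0 < Z S)) \<le> 1/2"
      proof -
        have "avg F (\<lambda>S. ind (0 < Z S) + ind (0 < - Z S)) \<le> avg F (\<lambda>_. 1)"
          by (intro avg_mono) auto
        moreover have "avg F (\<lambda>S. ind (0 < Z S) + ind (0 < - Z S)) = 2 * avg F (\<lambda>S. ind (0 < Z S))"
          unfolding avg_add using sym[of "\<lambda>z. ind (0 < z)"] by simp
        ultimately show ?thesis using avg_const[OF F] by simp
      qed
      define A where "A = avg F (\<lambda>S. Z S * ind (t \<le> Z S))"
      have midq: "avg F (\<lambda>S. ind (0 < Z S \<and> Z S < t)) = avg F (\<lambda>S. ind (0 < Z S)) - q"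
        unfolding q_def avg_diff[symmetric] using tpos by (intro avg_cong) auto
      have mid: "avg F (\<lambda>S. Z S * ind (0 < Z S \<and> Z S < t)) \<le> t * (1/2 - q)"
      proof -
        have "avg F (\<lambda>S. Z S * ind (0 < Z S \<and> Z S < t)) \<le> avg F (\<lambda>S. t * ind (0 < Z S \<and> Z S < t))"
          by (intro avg_mono) auto
        also have "\<dots> = t * (avg F (\<lambda>S. ind (0 < Z S)) - q)" unfolding avg_cmult midq ..
        also have "\<dots> \<le> t * (1/2 - q)" using P3 tpos by (intro mult_left_mono) auto
        finally show ?thesis .
      qed
      have eA: "e / 2 \<le> A + t * (1/2 - q)"
      proof -
        have "avg F (\<lambda>S. Z S * ind (0 < Z S)) = A + avg F (\<lambda>S. Z S * ind (0 < Z S \<and> Z S < t))"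
          unfolding A_def avg_add[symmetric] using tpos by (intro avg_cong) auto
        then show ?thesis using P1 mid by simp
      qed
      have A2: "A^2 \<le> v / 2 * q"
      proof -
        have "A = avg F (\<lambda>S. (Z S * ind (t \<le> Z S)) * ind (t \<le> Z S))"
          unfolding A_def by (intro avg_cong) auto
        then have "A^2 \<le> avg F (\<lambda>S. (Z S * ind (t \<le> Z S))^2) * avg F (\<lambda>S. (ind (t \<le> Z S))^2)"
          using avg_CS by simp
        also have "avg F (\<lambda>S. (ind (t \<le> Z S))^2) = q" unfolding q_def by (intro avg_cong) auto
        also have "avg F (\<lambda>S. (Z S * ind (t \<le> Z S))^2) \<le> avg F (\<lambda>S. (Z S)^2 * ind (0 < Z S))"
          using tpos by (intro avg_mono) (auto simp: power_mult_distrib)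
        then have "avg F (\<lambda>S. (Z S * ind (t \<le> Z S))^2) * q \<le> v / 2 * q"
          using P2 q01 by (intro mult_right_mono) auto
        finally show ?thesis .
      qed
      define \<sigma> where "\<sigma> = sqrt v"
      have sp: "0 < \<sigma>" unfolding \<sigma>_def using vpos by simp
      have sv: "\<sigma>^2 = v" unfolding \<sigma>_def using v0 by simp
      define u where "u = e / \<sigma>"
      define w where "w = sqrt (2 * q)"
      have w2: "w^2 = 2 * q" unfolding w_def using q01 by simp
      have w0: "0 \<le> w" unfolding w_def using q01 by simp
      have u0: "0 \<le> u" unfolding u_def using e0 sp by simp
      have u2: "1/2 \<le> u^2" unfolding u_def power_divide sv using sz vpos by (simp add: field_simps)
      have tt: "t = c * \<sigma>" unfolding t_def \<sigma>_def ..
      have L: "\<sigma> * (u - c + c * w^2) / 2 \<le> A"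
      proof -
        have "\<sigma> * (u - c + c * w^2) / 2 = e / 2 - t * (1/2 - q)"
          unfolding tt w2 u_def using sp by (simp add: field_simps)
        then show ?thesis using eA by linarith
      qed
      have Lpos: "0 \<le> u - c + c * w^2"
      proof -
        have "1/2 \<le> u" 
        proof (rule ccontr)
          assume "\<not> ?thesis" then have "u < 1/2" by simp
          then have "u^2 < (1/2)^2" using u0 by (intro power_strict_mono) auto
          then show False using u2 by (simp add: power2_eq_square)
        qed
        then show ?thesis using c23 cpos w0 by (simp add: add_nonneg_nonneg)
      qed
      have "(\<sigma> * (u - c + c * w^2) / 2)^2 \<le> A^2"
        using L Lpos sp by (intro power_mono) auto
      also have "\<dots> \<le> \<sigma>^2 * (w / 2)^2" using A2 sv w2 by (simp add: power_divide)
      also have "\<sigma>^2 * (w / 2)^2 = (\<sigma> * (w / 2))^2" by (simp only: power_mult_distrib)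
      finally have "(\<sigma> * (u - c + c * w^2) / 2)^2 \<le> (\<sigma> * (w / 2))^2" .
      moreover have "0 \<le> \<sigma> * (w / 2)" using sp w0 by simp
      ultimately have "\<sigma> * (u - c + c * w^2) / 2 \<le> \<sigma> * (w / 2)"
        by (rule power2_le_imp_le)
      then have "\<sigma> * (u - c + c * w^2) \<le> \<sigma> * w" by linarith
      then have key: "u - c + c * w^2 \<le> w" using sp by (simp only: mult_le_cancel_left_pos)
      show ?thesis by (rule arith2[OF cpos c23 q01 u2 u0 w_def key])
    qed
  qed
  then show ?thesis unfolding q_def t_def Z_def v_def .
qed


lemma (in prob_space) reduce:
  fixes Y :: "nat \<Rightarrow> 'a \<Rightarrow> real" and g :: "nat set \<Rightarrow> real"
  assumes F: "finite F"
    and ind: "indep_vars (\<lambda>_. borel) Y F"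
    and vals: "\<And>i \<omega>. i \<in> F \<Longrightarrow> \<omega> \<in> space M \<Longrightarrow> Y i \<omega> \<in> {0, 1}"
    and half: "\<And>i. i \<in> F \<Longrightarrow> prob {\<omega> \<in> space M. Y i \<omega> = 1} = 1 / 2"
  shows "expectation (\<lambda>\<omega>. g {i \<in> F. Y i \<omega> = 1}) = avg F g"
proof -
  have rv: "\<And>i. i \<in> F \<Longrightarrow> Y i \<in> borel_measurable M"
    using ind unfolding indep_vars_def2 by auto
  define A where "A S = {\<omega> \<in> space M. {i \<in> F. Y i \<omega> = 1} = S}" for S
  define B where "B (S::nat set) (i::nat) = (if i \<in> S then {1} else {0::real})" for S i
  have AB: "A S = (\<Inter>i\<in>F. Y i -` B S i \<inter> space M)" if S: "S \<subseteq> F" "F \<noteq> {}" for S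
  proof (intro set_eqI iffI)
    fix \<omega> assume "\<omega> \<in> A S"
    then show "\<omega> \<in> (\<Inter>i\<in>F. Y i -` B S i \<inter> space M)"
      unfolding A_def B_def using vals by auto
  next
    fix \<omega> assume w: "\<omega> \<in> (\<Inter>i\<in>F. Y i -` B S i \<inter> space M)"
    then have sp: "\<omega> \<in> space M" using S by auto
    have "{i \<in> F. Y i \<omega> = 1} = S"
      using w S unfolding B_def by (auto split: if_splits)
    then show "\<omega> \<in> A S" unfolding A_def using sp by auto
  qed
  have each: "prob (Y i -` B S i \<inter> space M) = 1/2" if i: "i \<in> F" for S i
  proof (cases "i \<in> S")
    case True
    then have "Y i -` B S i \<inter> space M = {\<omega> \<in> space M. Y i \<omega> = 1}" unfolding B_def by auto
    then show ?thesis using half[OF i] by simp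
  next
    case False
    have ev: "{\<omega> \<in> space M. Y i \<omega> = 1} \<in> events"
    proof -
      have "Y i -` {1} \<inter> space M \<in> events" using rv[OF i] by (rule measurable_sets) auto
      moreover have "Y i -` {1} \<inter> space M = {\<omega> \<in> space M. Y i \<omega> = 1}" by auto
      ultimately show ?thesis by simp
    qed
    have "Y i -` B S i \<inter> space M = space M - {\<omega> \<in> space M. Y i \<omega> = 1}"
      unfolding B_def using False vals[OF i] by auto
    then show ?thesis using prob_compl[OF ev] half[OF i] by simp
  qed
  have Asets: "A S \<in> events" and Aprob: "prob (A S) = 1 / 2 ^ card F" if S: "S \<subseteq> F" for S
  proof -
    have "A S \<in> events \<and> prob (A S) = 1 / 2 ^ card F"
    proof (cases "F = {}")
      case True
      then have "A S = space M" unfolding A_def using S by auto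
      then show ?thesis using True prob_space by simp
    next
      case False
      have m: "Y i -` B S i \<inter> space M \<in> events" if "i \<in> F" for i
        using rv[OF that] by (rule measurable_sets) (auto simp: B_def)
      have "A S \<in> events" unfolding AB[OF S False] by (rule sets.finite_INT) (use F False m in auto)
      moreover have "prob (A S) = (\<Prod>i\<in>F. prob (Y i -` B S i \<inter> space M))"
        unfolding AB[OF S False] by (rule indep_varsD[OF ind False F order_refl]) (auto simp: B_def)
      ultimately show ?thesis using each by (simp add: power_one_over)
    qed
    then show "A S \<in> events" "prob (A S) = 1 / 2 ^ card F" by auto
  qed
  have pw: "g {i \<in> F. Y i \<omega> = 1} = (\<Sum>S\<in>Pow F. g S * indicator (A S) \<omega>)" if w: "\<omega> \<in> space M" for \<omega>
  proof -
    have "(\<Sum>S\<in>Pow F. g S * indicator (A S) \<omega>) = (\<Sum>S\<in>Pow F. if S = {i \<in> F. Y i \<omega> = 1} then g S else 0)"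
      by (intro sum.cong) (auto simp: A_def w)
    also have "\<dots> = g {i \<in> F. Y i \<omega> = 1}" using F by (simp add: sum.delta')
    finally show ?thesis by simp
  qed
  have "expectation (\<lambda>\<omega>. g {i \<in> F. Y i \<omega> = 1}) = expectation (\<lambda>\<omega>. \<Sum>S\<in>Pow F. g S * indicator (A S) \<omega>)"
    by (rule Bochner_Integration.integral_cong) (auto simp: pw)
  also have "\<dots> = (\<Sum>S\<in>Pow F. expectation (\<lambda>\<omega>. g S * indicator (A S) \<omega>))"
    by (rule Bochner_Integration.integral_sum) (use Asets in \<open>auto simp: integrable_indicator_iff less_top[symmetric]\<close>)
  also have "\<dots> = (\<Sum>S\<in>Pow F. g S * (1 / 2 ^ card F))"
  proof (intro sum.cong refl)
    fix S assume "S \<in> Pow F"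
    then have "A S \<inter> space M = A S" "prob (A S) = 1 / 2 ^ card F" using Aprob unfolding A_def by auto
    then show "expectation (\<lambda>\<omega>. g S * indicator (A S) \<omega>) = g S * (1 / 2 ^ card F)" by simp
  qed
  also have "\<dots> = avg F g" unfolding avg_def by (simp add: sum_divide_distrib)
  finally show ?thesis .
qed

theorem claim8p4:
  fixes M :: "'s measure" and Y :: "nat \<Rightarrow> 's \<Rightarrow> real"
    and a :: "nat \<Rightarrow> real" and k :: nat and c :: real
  assumes "prob_space M"
    and "prob_space.indep_vars M (\<lambda>_. borel) Y {1..k}"
    and "\<And>i \<omega>. i \<in> {1..k} \<Longrightarrow> \<omega> \<in> space M \<Longrightarrow> Y i \<omega> \<in> {0, 1}"
    and "\<And>i. i \<in> {1..k} \<Longrightarrow> measure M {\<omega> \<in> space M. Y i \<omega> = 1} = 1 / 2"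
    and "\<And>i. i \<in> {1..k} \<Longrightarrow> a i \<ge> 0"
    and "0 \<le> c" and "c \<le> 1"
  defines "X \<equiv> (\<lambda>\<omega>. \<Sum>i\<in>{1..k}. a i * Y i \<omega>)"
  defines "\<mu> \<equiv> prob_space.expectation M X"
  defines "\<sigma> \<equiv> sqrt (prob_space.variance M X)"
  shows "measure M {\<omega> \<in> space M. X \<omega> \<ge> \<mu> + c * \<sigma>} \<ge> (1 - c)\<^sup>2 / 4"
proof -
  interpret P: prob_space M by fact
  define F where "F = {1..k::nat}"
  have F: "finite F" unfolding F_def by simp
  define b where "b = (\<lambda>i. a i / 2)"
  define x where "x = (\<lambda>S. \<Sum>i\<in>F. a i * ind (i \<in> S))"
  define m where "m = (\<Sum>i\<in>F. a i) / 2"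
  have red: "P.expectation (\<lambda>\<omega>. g {i \<in> F. Y i \<omega> = 1}) = avg F g" for g
    unfolding F_def using assms(2,3,4) by (intro P.reduce) auto
  have Xeq: "X \<omega> = x {i \<in> F. Y i \<omega> = 1}" if "\<omega> \<in> space M" for \<omega>
    unfolding X_def x_def F_def using assms(3)[OF _ that] by (intro sum.cong) auto
  have xZ: "x S = m + Zs b F S" for S
  proof -
    have "x S = (\<Sum>i\<in>F. a i / 2 + b i * sg i S)"
      unfolding x_def by (intro sum.cong) (auto simp: b_def sg_def)
    then show ?thesis unfolding m_def Zs_def by (simp add: sum.distrib sum_divide_distrib)
  qed
  have avgZ: "avg F (Zs b F) = 0"
  proof -
    have "avg F (\<lambda>S. Zs b F S) = avg F (\<lambda>S. - Zs b F S)" by (rule avg_sym[OF F])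
    then show ?thesis using avg_cmult[of F "-1" "Zs b F"] by simp
  qed
  have EX: "P.expectation X = avg F x"
  proof -
    have "P.expectation X = P.expectation (\<lambda>\<omega>. x {i \<in> F. Y i \<omega> = 1})"
      by (rule Bochner_Integration.integral_cong) (auto simp: Xeq)
    then show ?thesis using red by simp
  qed
  have mu: "\<mu> = m"
    unfolding \<mu>_def EX xZ avg_add avgZ using avg_const[OF F] by simp
  have var: "P.variance X = (\<Sum>j\<in>F. (b j)^2)"
  proof -
    have "P.variance X = P.expectation (\<lambda>\<omega>. (x {i \<in> F. Y i \<omega> = 1} - m)^2)"
      by (rule Bochner_Integration.integral_cong) (auto simp: Xeq mu[unfolded \<mu>_def])
    also have "\<dots> = avg F (\<lambda>S. (x S - m)^2)" by (rule red)
    also have "\<dots> = avg F (\<lambda>S. (Zs b F S)^2)" by (simp add: xZ)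
    finally show ?thesis using moment2[OF F] by simp
  qed
  have "measure M {\<omega> \<in> space M. X \<omega> \<ge> \<mu> + c * \<sigma>}
      = P.expectation (indicator {\<omega> \<in> space M. X \<omega> \<ge> \<mu> + c * \<sigma>})"
    by (simp add: Int_absorb2)
  also have "\<dots> = P.expectation (\<lambda>\<omega>. ind (\<mu> + c * \<sigma> \<le> x {i \<in> F. Y i \<omega> = 1}))"
    by (rule Bochner_Integration.integral_cong) (auto simp: Xeq indicator_def)
  also have "\<dots> = avg F (\<lambda>S. ind (\<mu> + c * \<sigma> \<le> x S))" by (rule red)
  also have "\<dots> = avg F (\<lambda>S. ind (c * sqrt (\<Sum>j\<in>F. (b j)^2) \<le> Zs b F S))"
    unfolding xZ mu \<sigma>_def var by simp
  finally show ?thesis using core[OF F assms(6,7), of b] by simp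
qed

end
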